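(* Let $D$ be a long knot diagram (possibly with null vertices) and let $a\neq b$ be two points on edges of $D$, away from crossings and null vertices. If $D'$ is obtained from $D$ by a Reidemeister move (of type R1, R2 or R3, with any orientations) performed inside a disk that contains neither $a$ nor $b$, then $\tilde g_{ab}$ computed in $D'$ equals $\tilde g_{ab}$ computed in $D$. Consequently $\tilde g_{ab}$ is unchanged under any sequence of Reidemeister moves performed away from $a$ and $b$, and the same holds for $\tilde g_{\nu ab}$ for $\nu=1,2,3$.
   Context: A long knot diagram is a planar diagram of a long oriented knot. It may contain null vertices: marked points on the knot (away from crossings) whose only role is to cut edges. Edges are the arcs obtained by cutting the knot at every crossing (on both strands) and at every null vertex; they are labelled by distinct labels, and for a label $\ell$ we write $\ell^+$ for the label of the next edge along the orientation. A crossing is $c=(s,i,j)$ with sign $s=\pm1$, incoming over-edge $i$ and incoming under-edge $j$ (outgoing over-edge $i^+$, outgoing under-edge $j^+$). A null vertex with incoming edge $j$ and outgoing edge $k$ is recorded by $(j,k)$. Let $A=I+\sum_cA_c+\sum_{\mathrm{nv}}A_{\mathrm{nv}}$ (square matrix indexed by edge labels over $\mathbb{Z}[T^{\pm1}]$), where for $c=(s,i,j)$, $A_c$ is zero except for entry $-T^s$ at $(i,i^+)$, $T^s-1$ at $(i,j^+)$ and $-1$ at $(j,j^+)$; and for a null vertex $(j,k)$, $A_{\mathrm{nv}}$ is zero except for $-1$ at $(j,k)$. Let $G=(g_{\alpha\beta})=A^{-1}$ over $\mathbb{Q}(T)$. For distinct points $a,b$ on edges $\alpha,\beta$ (away from crossings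 and null vertices), $\tilde g_{ab}=g_{\alpha\beta}$ if $\alpha\neq\beta$ or if $\alpha=\beta$ and $a$ precedes $b$ along the orientation, and $\tilde g_{ab}=g_{\alpha\beta}-1$ if $\alpha=\beta$ and $a$ comes after $b$. For indeterminates $T_1,T_2$ and $T_3=T_1T_2$, $\tilde g_{\nu ab}$ is $\tilde g_{ab}$ with $T$ replaced by $T_\nu$. Since the diagrams coincide outside the disk, the points $a,b$ make sense in both. *)

theory Defs
  imports "HOL-Computational_Algebra.Polynomial" "HOL-Computational_Algebra.Fraction_Field"
    "Jordan_Normal_Form.Matrix"
begin

text \<open>A long knot diagram is recorded by the sequence of events met when travelling along
the long knot in its orientation: passing a crossing named c (of sign s) on the over- or
under-strand, passing a null vertex, or passing one of the two marked points a, b.  Edges are labelled 0,1,2,... in order along the knot,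
so that the successor label of l is l+1.\<close>

datatype event = Over nat int | Under nat int | NullV | PtA | PtB

fun is_over :: "nat \<Rightarrow> event \<Rightarrow> bool" where
  "is_over c (Over d s) = (c = d)" | "is_over c _ = False"

fun is_under :: "nat \<Rightarrow> event \<Rightarrow> bool" where
  "is_under c (Under d s) = (c = d)" | "is_under c _ = False"

definition wf_diag :: "event list \<Rightarrow> bool" where
  "wf_diag xs \<longleftrightarrow>
     count_list xs PtA = 1 \<and> count_list xs PtB = 1 \<and>
     (\<forall>c. length (filter (is_over c) xs) = length (filter (is_under c) xs)
          \<and> length (filter (is_over c) xs) \<le> 1) \<and>
     (\<forall>c s s'. Over c s \<in> set xs \<longrightarrow> Under c s' \<in> set xs \<longrightarrow> s = s') \<and>
     (\<forall>c s. Over c s \<in> set xs \<or> Under c s \<in> set xs \<longrightarrow> s = 1 \<or> s = -1)"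

definition cuts :: "event \<Rightarrow> bool" where
  "cuts e \<longleftrightarrow> e \<noteq> PtA \<and> e \<noteq> PtB"

type_synonym qT = "rat poly fract"

definition Tv :: qT where "Tv = Fract [:0, 1:] 1"

definition under_pos :: "event list \<Rightarrow> nat \<Rightarrow> nat" where
  "under_pos ys c = (LEAST j. j < length ys \<and> is_under c (ys ! j))"

text \<open>Contribution of the k-th cutting event (whose incoming edge is k) to entry (r,q).\<close>
definition contrib :: "event list \<Rightarrow> nat \<Rightarrow> nat \<Rightarrow> nat \<Rightarrow> qT" where
  "contrib ys k r q =
     (case ys ! k of
        Over c s \<Rightarrow> (if r = k \<and> q = k + 1 then - (Tv powi s) else 0)
                   + (if r = k \<and> q = under_pos ys c + 1 then Tv powi s - 1 else 0)
      | Under c s \<Rightarrow> (if r = k \<and> q = k + 1 then -1 else 0)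
      | NullV \<Rightarrow> (if r = k \<and> q = k + 1 then -1 else 0)
      | PtA \<Rightarrow> 0
      | PtB \<Rightarrow> 0)"

definition num_edges :: "event list \<Rightarrow> nat" where
  "num_edges xs = length (filter cuts xs) + 1"

definition Amat :: "event list \<Rightarrow> qT mat" where
  "Amat xs = (let ys = filter cuts xs in
     mat (length ys + 1) (length ys + 1)
       (\<lambda>(r, q). (if r = q then 1 else 0) + (\<Sum>k<length ys. contrib ys k r q)))"

definition Gmat :: "event list \<Rightarrow> qT mat" where
  "Gmat xs = (SOME B. B \<in> carrier_mat (num_edges xs) (num_edges xs)
                  \<and> Amat xs * B = 1\<^sub>m (num_edges xs) \<and> B * Amat xs = 1\<^sub>m (num_edges xs))"

definition pos_of :: "event list \<Rightarrow> event \<Rightarrow> nat" where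
  "pos_of xs e = (LEAST p. p < length xs \<and> xs ! p = e)"

definition edge_at :: "event list \<Rightarrow> nat \<Rightarrow> nat" where
  "edge_at xs p = length (filter cuts (take p xs))"

definition gtilde :: "event list \<Rightarrow> qT" where
  "gtilde xs = (let pa = pos_of xs PtA; pb = pos_of xs PtB;
                    \<alpha> = edge_at xs pa; \<beta> = edge_at xs pb in
                 if \<alpha> = \<beta> \<and> pb < pa then Gmat xs $$ (\<alpha>, \<beta>) - 1 else Gmat xs $$ (\<alpha>, \<beta>))"

definition R1_step :: "event list \<Rightarrow> event list \<Rightarrow> bool" where
  "R1_step D D' \<longleftrightarrow> (\<exists>p0 p1 c s seg. (s = 1 \<or> s = -1) \<and>
      (seg = [Over c s, Under c s] \<or> seg = [Under c s, Over c s]) \<and>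
      D = p0 @ p1 \<and> D' = p0 @ seg @ p1)"

text \<open>R2: the over-strand passes over the under-strand at two crossings of opposite sign;
the two strands are parallel or antiparallel; either strand may come first along the knot.\<close>
definition R2_step :: "event list \<Rightarrow> event list \<Rightarrow> bool" where
  "R2_step D D' \<longleftrightarrow> (\<exists>p0 p1 p2 c1 c2 s par ofirst ov un. c1 \<noteq> c2 \<and> (s = 1 \<or> s = -1) \<and>
      ov = [Over c1 s, Over c2 (- s)] \<and>
      un = (if par then [Under c1 s, Under c2 (- s)] else [Under c2 (- s), Under c1 s]) \<and>
      D = p0 @ p1 @ p2 \<and>
      D' = p0 @ (if ofirst then ov else un) @ p1 @ (if ofirst then un else ov) @ p2)"

text \<open>R3, modelled on three straight oriented lines L0: y=0 (direction e0*(1,0)),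
L1: x=0 (direction e1*(0,1)), L2: x+y=1 (direction e2*(1,-1)); the move translates L2 across
the point L0\<inter>L1 to x+y=-1, which reverses the order of the two crossings on every line.
The height function h (a permutation of 0,1,2) decides over/under; the sign of a crossing
is the sign of the cross product (over direction) x (under direction).\<close>

definition kap0 :: "(nat \<Rightarrow> int) \<Rightarrow> nat \<Rightarrow> nat \<Rightarrow> int" where
  "kap0 e i j = (if i = 0 \<and> j = 1 then e 0 * e 1
                 else if i = 0 \<and> j = 2 then - (e 0 * e 2)
                 else - (e 1 * e 2))"

definition kap :: "(nat \<Rightarrow> int) \<Rightarrow> nat \<Rightarrow> nat \<Rightarrow> int" where
  "kap e i j = (if i < j then kap0 e i j else - kap0 e j i)"

definition r3_event :: "(nat \<Rightarrow> int) \<Rightarrow> (nat \<Rightarrow> nat) \<Rightarrow> (nat \<Rightarrow> nat \<Rightarrow> nat) \<Rightarrow> nat \<Rightarrow> nat \<Rightarrow> event" where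
  "r3_event e h cn i j =
     (if h j < h i then Over (cn (min i j) (max i j)) (kap e i j)
      else Under (cn (min i j) (max i j)) (kap e j i))"

definition r3_order :: "(nat \<Rightarrow> int) \<Rightarrow> nat \<Rightarrow> nat list" where
  "r3_order e i = (if i = 0 then (if e 0 = 1 then [1, 2] else [2, 1])
                   else if i = 1 then (if e 1 = 1 then [0, 2] else [2, 0])
                   else (if e 2 = 1 then [1, 0] else [0, 1]))"

definition r3_before :: "(nat \<Rightarrow> int) \<Rightarrow> (nat \<Rightarrow> nat) \<Rightarrow> (nat \<Rightarrow> nat \<Rightarrow> nat) \<Rightarrow> nat \<Rightarrow> event list" where
  "r3_before e h cn i = map (r3_event e h cn i) (r3_order e i)"

definition r3_after :: "(nat \<Rightarrow> int) \<Rightarrow> (nat \<Rightarrow> nat) \<Rightarrow> (nat \<Rightarrow> nat \<Rightarrow> nat) \<Rightarrow> nat \<Rightarrow> event list" where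
  "r3_after e h cn i = rev (r3_before e h cn i)"

definition R3_step :: "event list \<Rightarrow> event list \<Rightarrow> bool" where
  "R3_step D D' \<longleftrightarrow> (\<exists>p0 p1 p2 p3 e h cn (\<sigma> :: nat \<Rightarrow> nat).
      (\<forall>i<3. e i = 1 \<or> e i = -1) \<and>
      h ` {0, 1, 2} = {0, 1, 2} \<and> \<sigma> ` {0, 1, 2} = {0, 1, 2} \<and>
      distinct [cn 0 1, cn 0 2, cn 1 2] \<and>
      D = p0 @ r3_before e h cn (\<sigma> 0) @ p1 @ r3_before e h cn (\<sigma> 1) @ p2
             @ r3_before e h cn (\<sigma> 2) @ p3 \<and>
      D' = p0 @ r3_after e h cn (\<sigma> 0) @ p1 @ r3_after e h cn (\<sigma> 1) @ p2
             @ r3_after e h cn (\<sigma> 2) @ p3)"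

definition reid_move :: "event list \<Rightarrow> event list \<Rightarrow> bool" where
  "reid_move D D' \<longleftrightarrow> wf_diag D \<and> wf_diag D' \<and>
     (R1_step D D' \<or> R1_step D' D \<or> R2_step D D' \<or> R2_step D' D \<or>
      R3_step D D' \<or> R3_step D' D)"

end

theory Submission
  imports Defs "HOL-Computational_Algebra.Polynomial_Factorial" "Jordan_Normal_Form.Determinant"
begin

definition hsys :: "nat \<Rightarrow> (nat \<Rightarrow> qT) \<Rightarrow> bool" where
  "hsys m d \<longleftrightarrow> d m = 0 \<and> (\<forall>p<m. d p = d (Suc p) \<or>
     (\<exists>q\<le>m. \<exists>s::int. (s = 1 \<or> s = -1) \<and> d p = Tv powi s * d (Suc p) + (1 - Tv powi s) * d q))"

lemma Tv_eq: "Tv = to_fract [:0,1:]"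
  by (simp add: Tv_def to_fract_def)

lemma Tv_nz: "Tv \<noteq> 0"
  by (simp add: Tv_eq)

lemma hsys_root:
  assumes h: "hsys m (\<lambda>p. to_fract (f p))" and p: "p \<le> m"
  shows "poly (f p) 1 = 0"
proof -
  have "\<forall>k. k \<le> m \<longrightarrow> poly (f (m - k)) 1 = 0"
  proof
    fix k show "k \<le> m \<longrightarrow> poly (f (m - k)) 1 = 0"
    proof (induction k)
      case 0
      then show ?case using h by (simp add: hsys_def)
    next
      case (Suc k)
      show ?case
      proof
        assume km: "Suc k \<le> m"
        define p where "p = m - Suc k"
        have pm: "p < m" and sp: "Suc p = m - k" using km by (auto simp: p_def)
        have ih: "poly (f (Suc p)) 1 = 0" using Suc km sp by simp
        from h pm have "to_fract (f p) = to_fract (f (Suc p)) \<or>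
          (\<exists>q\<le>m. \<exists>s::int. (s = 1 \<or> s = -1) \<and> to_fract (f p) = Tv powi s * to_fract (f (Suc p)) + (1 - Tv powi s) * to_fract (f q))"
          by (simp add: hsys_def)
        then have "poly (f p) 1 = poly (f (Suc p)) 1"
        proof
          assume "to_fract (f p) = to_fract (f (Suc p))" then show ?thesis by simp
        next
          assume "\<exists>q\<le>m. \<exists>s::int. (s = 1 \<or> s = -1) \<and> to_fract (f p) = Tv powi s * to_fract (f (Suc p)) + (1 - Tv powi s) * to_fract (f q)"
          then obtain q s where s: "s = 1 \<or> s = -1" and e: "to_fract (f p) = Tv powi s * to_fract (f (Suc p)) + (1 - Tv powi s) * to_fract (f q)"
            by blast
          from s show ?thesis
          proof
            assume "s = 1"
            with e have "to_fract (f p) = to_fract ([:0,1:] * f (Suc p) + (1 - [:0,1:]) * f q)"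
              unfolding to_fract_add to_fract_mult to_fract_diff to_fract_1 by (simp add: Tv_eq)
            then have "f p = [:0,1:] * f (Suc p) + (1 - [:0,1:]) * f q" by (simp only: to_fract_eq_iff)
            then show ?thesis by simp
          next
            assume "s = -1"
            with e have "to_fract (f p) = inverse (to_fract [:0,1:]) * to_fract (f (Suc p)) + (1 - inverse (to_fract [:0,1:])) * to_fract (f q)"
              by (simp add: Tv_eq power_int_minus)
            then have "to_fract [:0,1:] * to_fract (f p) = to_fract [:0,1:] * (inverse (to_fract [:0,1:]) * to_fract (f (Suc p)) + (1 - inverse (to_fract [:0,1:])) * to_fract (f q))"
              by simp
            also have "\<dots> = to_fract (f (Suc p)) + (to_fract [:0,1:] - 1) * to_fract (f q)"
              by (simp add: field_simps)
            finally have "to_fract ([:0,1:] * f p) = to_fract (f (Suc p) + ([:0,1:] - 1) * f q)"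
              unfolding to_fract_add to_fract_mult to_fract_diff to_fract_1 by simp
            then have "[:0,1:] * f p = f (Suc p) + ([:0,1:] - 1) * f q" by (simp only: to_fract_eq_iff)
            then have "poly ([:0,1:] * f p) 1 = poly (f (Suc p) + ([:0,1:] - 1) * f q) 1" by simp
            then show ?thesis by simp
          qed
        qed
        with ih show "poly (f (m - Suc k)) 1 = 0" by (simp add: p_def)
      qed
    qed
  qed
  from this[rule_format, of "m - p"] p show ?thesis by simp
qed

lemma hsys_cancel:
  assumes h: "hsys m (\<lambda>p. c * d p)" and c: "c \<noteq> 0"
  shows "hsys m d"
  unfolding hsys_def
proof (intro conjI allI impI)
  show "d m = 0" using h c by (simp add: hsys_def)
next
  fix p assume pm: "p < m"
  from h pm have "c * d p = c * d (Suc p) \<or>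
     (\<exists>q\<le>m. \<exists>s::int. (s = 1 \<or> s = -1) \<and> c * d p = Tv powi s * (c * d (Suc p)) + (1 - Tv powi s) * (c * d q))"
    by (simp add: hsys_def)
  then show "d p = d (Suc p) \<or>
     (\<exists>q\<le>m. \<exists>s::int. (s = 1 \<or> s = -1) \<and> d p = Tv powi s * d (Suc p) + (1 - Tv powi s) * d q)"
  proof
    assume "c * d p = c * d (Suc p)" then show ?thesis using c by simp
  next
    assume "\<exists>q\<le>m. \<exists>s::int. (s = 1 \<or> s = -1) \<and> c * d p = Tv powi s * (c * d (Suc p)) + (1 - Tv powi s) * (c * d q)"
    then obtain q s where q: "q \<le> m" "s = 1 \<or> s = -1" and e: "c * d p = Tv powi s * (c * d (Suc p)) + (1 - Tv powi s) * (c * d q)"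
      by blast
    from e have "c * d p = c * (Tv powi s * d (Suc p) + (1 - Tv powi s) * d q)"
      by (simp add: algebra_simps)
    then have "d p = Tv powi s * d (Suc p) + (1 - Tv powi s) * d q" using c by simp
    then show ?thesis using q by blast
  qed
qed

lemma hsys_scale:
  assumes h: "hsys m d"
  shows "hsys m (\<lambda>p. c * d p)"
  unfolding hsys_def
proof (intro conjI allI impI)
  show "c * d m = 0" using h by (simp add: hsys_def)
next
  fix p assume pm: "p < m"
  from h pm have "d p = d (Suc p) \<or>
     (\<exists>q\<le>m. \<exists>s::int. (s = 1 \<or> s = -1) \<and> d p = Tv powi s * d (Suc p) + (1 - Tv powi s) * d q)"
    by (simp add: hsys_def)
  then show "c * d p = c * d (Suc p) \<or>
     (\<exists>q\<le>m. \<exists>s::int. (s = 1 \<or> s = -1) \<and> c * d p = Tv powi s * (c * d (Suc p)) + (1 - Tv powi s) * (c * d q))"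
  proof
    assume "d p = d (Suc p)" then show ?thesis by simp
  next
    assume "\<exists>q\<le>m. \<exists>s::int. (s = 1 \<or> s = -1) \<and> d p = Tv powi s * d (Suc p) + (1 - Tv powi s) * d q"
    then obtain q s where q: "q \<le> m" "s = 1 \<or> s = -1" and e: "d p = Tv powi s * d (Suc p) + (1 - Tv powi s) * d q"
      by blast
    have "c * d p = Tv powi s * (c * d (Suc p)) + (1 - Tv powi s) * (c * d q)"
      by (subst e) (simp add: algebra_simps)
    then show ?thesis using q by blast
  qed
qed

lemma hsys_cong:
  assumes eq: "\<And>p. p \<le> m \<Longrightarrow> d p = d' p" and h: "hsys m d"
  shows "hsys m d'"
  unfolding hsys_def
proof (intro conjI allI impI)
  show "d' m = 0" using h eq[of m] by (simp add: hsys_def)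
next
  fix p assume pm: "p < m"
  then have e1: "d p = d' p" and e2: "d (Suc p) = d' (Suc p)" using eq by auto
  from h pm have "d p = d (Suc p) \<or>
     (\<exists>q\<le>m. \<exists>s::int. (s = 1 \<or> s = -1) \<and> d p = Tv powi s * d (Suc p) + (1 - Tv powi s) * d q)"
    by (simp add: hsys_def)
  then show "d' p = d' (Suc p) \<or>
     (\<exists>q\<le>m. \<exists>s::int. (s = 1 \<or> s = -1) \<and> d' p = Tv powi s * d' (Suc p) + (1 - Tv powi s) * d' q)"
  proof
    assume "d p = d (Suc p)" then show ?thesis using e1 e2 by simp
  next
    assume "\<exists>q\<le>m. \<exists>s::int. (s = 1 \<or> s = -1) \<and> d p = Tv powi s * d (Suc p) + (1 - Tv powi s) * d q"
    then obtain q s where q: "q \<le> m" "s = 1 \<or> s = -1" and e: "d p = Tv powi s * d (Suc p) + (1 - Tv powi s) * d q"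
      by blast
    then show ?thesis using e1 e2 eq[OF q(1)] by metis
  qed
qed

lemma hsys_dvd:
  "\<forall>f. hsys m (\<lambda>p. to_fract (f p)) \<longrightarrow> (\<forall>p\<le>m. [:-1,1:] ^ k dvd f p)"
proof (induction k)
  case 0
  then show ?case by simp
next
  case (Suc k)
  show ?case
  proof (intro allI impI)
    fix f p assume h: "hsys m (\<lambda>p. to_fract (f p))" and p: "p \<le> m"
    have "\<forall>p'. \<exists>g. p' \<le> m \<longrightarrow> f p' = [:-1,1:] * g"
    proof
      fix p' show "\<exists>g. p' \<le> m \<longrightarrow> f p' = [:-1,1:] * g"
      proof (cases "p' \<le> m")
        case True
        then have "poly (f p') 1 = 0" using hsys_root[OF h] by blast
        then have "[:-1,1:] dvd f p'" using poly_eq_0_iff_dvd[of "f p'" 1] by simp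
        then show ?thesis by (blast elim: dvdE)
      qed simp
    qed
    then obtain g where g: "\<And>p'. p' \<le> m \<Longrightarrow> f p' = [:-1,1:] * g p'" by metis
    have "hsys m (\<lambda>p. to_fract [:-1,1:] * to_fract (g p))"
    proof -
      show ?thesis by (rule hsys_cong[OF _ h]) (simp only: g to_fract_mult)
    qed
    then have "hsys m (\<lambda>p. to_fract (g p))" by (rule hsys_cancel) simp
    with Suc have "[:-1,1:] ^ k dvd g p" using p by blast
    then show "[:-1,1:] ^ Suc k dvd f p" unfolding g[OF p] power_Suc by (rule mult_dvd_mono[OF dvd_refl])
  qed
qed

lemma hsys_poly_zero:
  assumes h: "hsys m (\<lambda>p. to_fract (f p))" and p: "p \<le> m"
  shows "f p = 0"
proof (rule ccontr)
  assume nz: "f p \<noteq> 0"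
  have "[:-1,1:] ^ (degree (f p) + 1) dvd f p" using hsys_dvd h p by blast
  from dvd_imp_degree_le[OF this nz] show False by (simp only: degree_linear_power)
qed

lemma fract_clear: "\<exists>a b. b \<noteq> 0 \<and> (x::'a::idom fract) * to_fract b = to_fract a"
proof (cases x)
  case (Fract a b)
  then show ?thesis by (intro exI[of _ a] exI[of _ b]) (simp add: to_fract_def eq_fract)
qed

lemma clear_denoms:
  "\<exists>P. P \<noteq> 0 \<and> (\<forall>p\<le>(m::nat). \<exists>g. (d p :: qT) * to_fract P = to_fract g)"
proof (induction m)
  case 0
  obtain a b where "b \<noteq> 0" "d 0 * to_fract b = to_fract a" using fract_clear by blast
  then show ?case by auto
next
  case (Suc m)
  then obtain P where P: "P \<noteq> 0" "\<forall>p\<le>m. \<exists>g. d p * to_fract P = to_fract g" by blast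
  obtain a b where ab: "b \<noteq> 0" "d (Suc m) * to_fract b = to_fract a" using fract_clear by blast
  have "\<forall>p\<le>Suc m. \<exists>g. d p * to_fract (P * b) = to_fract g"
  proof (intro allI impI)
    fix p assume "p \<le> Suc m"
    then consider "p \<le> m" | "p = Suc m" by linarith
    then show "\<exists>g. d p * to_fract (P * b) = to_fract g"
    proof cases
      case 1
      then obtain g where "d p * to_fract P = to_fract g" using P by blast
      then have "d p * to_fract (P * b) = to_fract (g * b)" by (simp add: mult.assoc[symmetric])
      then show ?thesis by blast
    next
      case 2
      then have "d p * to_fract (P * b) = to_fract (a * P)" using ab
        by (simp add: mult.assoc[symmetric])
      then show ?thesis by blast
    qed
  qed
  moreover have "P * b \<noteq> 0" using P ab by simp
  ultimately show ?case by blast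
qed

lemma hsys_zero:
  assumes h: "hsys m d" and p: "p \<le> m"
  shows "d p = 0"
proof -
  obtain P where P: "P \<noteq> 0" "\<forall>p\<le>m. \<exists>g. d p * to_fract P = to_fract g"
    using clear_denoms by blast
  then obtain f where f: "\<And>p. p \<le> m \<Longrightarrow> d p * to_fract P = to_fract (f p)" by metis
  have "hsys m (\<lambda>p. to_fract P * d p)" using hsys_scale[OF h] .
  then have "hsys m (\<lambda>p. to_fract (f p))"
    by (rule hsys_cong[rotated]) (simp add: f[symmetric] mult.commute)
  then have "f p = 0" using hsys_poly_zero p by blast
  then have "d p * to_fract P = 0" using f p by simp
  then show ?thesis using P by simp
qed


fun step :: "(nat \<Rightarrow> qT) \<Rightarrow> qT \<Rightarrow> event \<Rightarrow> qT \<Rightarrow> qT \<Rightarrow> bool" where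
  "step U a (Over c s) v v' = (v = Tv powi s * v' + (1 - Tv powi s) * U c)"
| "step U a (Under c s) v v' = (v = v' \<and> U c = v')"
| "step U a NullV v v' = (v = v')"
| "step U a PtA v v' = (v = v' \<and> a = v)"
| "step U a PtB v v' = (v = v' + 1)"

fun run :: "(nat \<Rightarrow> qT) \<Rightarrow> qT \<Rightarrow> event list \<Rightarrow> qT \<Rightarrow> qT \<Rightarrow> bool" where
  "run U a [] v w = (v = w)"
| "run U a (e # xs) v w = (\<exists>v'. step U a e v v' \<and> run U a xs v' w)"

lemma run_append: "run U a (xs @ ys) v w = (\<exists>m. run U a xs v m \<and> run U a ys m w)"
  by (induction xs arbitrary: v) auto

lemma run_seg:
  "run U a xs v w \<longleftrightarrow> (\<exists>y. y 0 = v \<and> y (length xs) = w \<and> (\<forall>p<length xs. step U a (xs!p) (y p) (y (Suc p))))"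
proof (induction xs arbitrary: v)
  case Nil
  then show ?case by auto
next
  case (Cons e xs)
  show ?case
  proof
    assume "run U a (e # xs) v w"
    then obtain v' where s: "step U a e v v'" and r: "run U a xs v' w" by auto
    from r Cons obtain y where y: "y 0 = v'" "y (length xs) = w" "\<forall>p<length xs. step U a (xs!p) (y p) (y (Suc p))"
      by blast
    define z where "z = (\<lambda>p. if p = 0 then v else y (p - 1))"
    have "\<forall>p<length (e # xs). step U a ((e # xs)!p) (z p) (z (Suc p))"
    proof (intro allI impI)
      fix p assume "p < length (e # xs)"
      then show "step U a ((e # xs)!p) (z p) (z (Suc p))"
        using s y by (cases p) (auto simp: z_def)
    qed
    then show "\<exists>y. y 0 = v \<and> y (length (e # xs)) = w \<and> (\<forall>p<length (e # xs). step U a ((e # xs)!p) (y p) (y (Suc p)))"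
      using y by (intro exI[of _ z]) (auto simp: z_def)
  next
    assume "\<exists>y. y 0 = v \<and> y (length (e # xs)) = w \<and> (\<forall>p<length (e # xs). step U a ((e # xs)!p) (y p) (y (Suc p)))"
    then obtain y where y: "y 0 = v" "y (length (e # xs)) = w" "\<forall>p<length (e # xs). step U a ((e # xs)!p) (y p) (y (Suc p))"
      by blast
    have "run U a xs (y 1) w"
      using Cons[of "y 1"] y by (intro Cons[THEN iffD2] exI[of _ "\<lambda>p. y (Suc p)"]) auto
    moreover have "step U a e v (y 1)" using y(1) y(3)[rule_format, of 0] by simp
    ultimately show "run U a (e # xs) v w" by auto
  qed
qed

lemma wf_under_exists:
  assumes wf: "wf_diag D" and p: "p < length D" and o: "D ! p = Over c s"
  shows "\<exists>q<length D. \<exists>s'. D ! q = Under c s'"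
proof -
  have eq: "length (filter (is_over c) D) = length (filter (is_under c) D)"
    using wf by (simp add: wf_diag_def)
  have "Over c s \<in> set D" using p o by (metis nth_mem)
  then have "filter (is_over c) D \<noteq> []" by (metis filter_empty_conv is_over.simps(1))
  then have "filter (is_under c) D \<noteq> []" using eq by auto
  then obtain x where "x \<in> set D" "is_under c x" by (auto simp: filter_empty_conv)
  moreover from \<open>is_under c x\<close> have "\<exists>s'. x = Under c s'" by (cases x) auto
  ultimately obtain s' where "Under c s' \<in> set D" by blast
  then show ?thesis by (auto simp: in_set_conv_nth)
qed

lemma wf_ptA:
  assumes wf: "wf_diag D" shows "\<exists>p<length D. D ! p = PtA"
proof -
  have "count_list D PtA = 1" using wf by (simp add: wf_diag_def)
  then have "PtA \<in> set D" by (metis count_list_0_iff zero_neq_one)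
  then show ?thesis by (auto simp: in_set_conv_nth)
qed

lemma wf_ptB:
  assumes wf: "wf_diag D" shows "\<exists>p<length D. D ! p = PtB"
proof -
  have "count_list D PtB = 1" using wf by (simp add: wf_diag_def)
  then have "PtB \<in> set D" by (metis count_list_0_iff zero_neq_one)
  then show ?thesis by (auto simp: in_set_conv_nth)
qed

lemma run_unique:
  assumes wf: "wf_diag D" and r1: "run U a D v 0" and r2: "run U' a' D v' 0"
  shows "a = a'"
proof -
  let ?m = "length D"
  obtain y where y: "y ?m = 0" "\<forall>p<?m. step U a (D!p) (y p) (y (Suc p))"
    using r1 run_seg by blast
  obtain y' where y': "y' ?m = 0" "\<forall>p<?m. step U' a' (D!p) (y' p) (y' (Suc p))"
    using r2 run_seg by blast
  define d where "d = (\<lambda>p. y p - y' p)"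
  have "hsys ?m d"
    unfolding hsys_def
  proof (intro conjI allI impI)
    show "d ?m = 0" using y y' by (simp add: d_def)
  next
    fix p assume pm: "p < ?m"
    have sp: "step U a (D!p) (y p) (y (Suc p))" "step U' a' (D!p) (y' p) (y' (Suc p))"
      using y y' pm by auto
    show "d p = d (Suc p) \<or>
     (\<exists>q\<le>?m. \<exists>s::int. (s = 1 \<or> s = -1) \<and> d p = Tv powi s * d (Suc p) + (1 - Tv powi s) * d q)"
    proof (cases "D!p")
      case (Over c s)
      obtain q s' where q: "q < ?m" "D ! q = Under c s'" using wf_under_exists[OF wf pm Over] by blast
      have uq: "U c = y (Suc q)" "U' c = y' (Suc q)" using y(2) y'(2) q by (metis step.simps(2))+
      have "Over c s \<in> set D" using pm Over by (metis nth_mem)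
      then have "s = 1 \<or> s = -1" using wf unfolding wf_diag_def by blast
      moreover have "d p = Tv powi s * d (Suc p) + (1 - Tv powi s) * d (Suc q)"
        using sp Over uq by (simp add: d_def algebra_simps)
      ultimately show ?thesis using q by (intro disjI2 exI[of _ "Suc q"]) auto
    qed (use sp in \<open>auto simp: d_def\<close>)
  qed
  obtain pa where pa: "pa < ?m" "D ! pa = PtA" using wf_ptA[OF wf] by blast
  have "a = y pa" "a' = y' pa" using y(2) y'(2) pa by (metis step.simps(4))+
  moreover have "d pa = 0" using hsys_zero[OF \<open>hsys ?m d\<close>] pa by simp
  ultimately show ?thesis by (simp add: d_def)
qed


lemma count_list_filter: "count_list xs x = length (filter (\<lambda>y. y = x) xs)"
  by (induction xs) auto

lemma filter_le1_unique:
  assumes le: "length (filter P l) \<le> 1" and i: "i < length l" and j: "j < length l"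
    and Pi: "P (l!i)" and Pj: "P (l!j)"
  shows "i = j"
proof (rule ccontr)
  assume ne: "i \<noteq> j"
  have "{i, j} \<subseteq> {k. k < length l \<and> P (l!k)}" using i j Pi Pj by auto
  then have "card {i, j} \<le> card {k. k < length l \<and> P (l!k)}" by (intro card_mono) auto
  then have "2 \<le> length (filter P l)" using ne by (simp add: length_filter_conv_card)
  with le show False by simp
qed

lemma edge_at_Suc:
  assumes "p < length D"
  shows "edge_at D (Suc p) = edge_at D p + (if cuts (D!p) then 1 else 0)"
  using assms by (simp add: edge_at_def take_Suc_conv_app_nth)

lemma edge_at_0: "edge_at D 0 = 0" by (simp add: edge_at_def)

lemma edge_at_len: "edge_at D (length D) = length (filter cuts D)" by (simp add: edge_at_def)

lemma edge_at_mono: "p \<le> p' \<Longrightarrow> edge_at D p \<le> edge_at D p'"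
proof -
  assume "p \<le> p'"
  then have "take p D = take p (take p' D)" by (simp add: min_def)
  moreover have "length (filter cuts (take p (take p' D))) \<le> length (filter cuts (take p' D))"
    by (metis append_take_drop_id filter_append length_append le_add1)
  ultimately show ?thesis by (simp add: edge_at_def)
qed

lemma edge_at_le: "edge_at D p \<le> length (filter cuts D)"
  by (simp add: edge_at_def) (metis append_take_drop_id filter_append length_append le_add1)

lemma edge_at_nth:
  assumes p: "p < length D" and c: "cuts (D!p)"
  shows "filter cuts D ! edge_at D p = D ! p"
proof -
  have "D = take p D @ D!p # drop (Suc p) D" using p by (simp add: Cons_nth_drop_Suc)
  then have "filter cuts D = filter cuts (take p D) @ D!p # filter cuts (drop (Suc p) D)"
    using c by (metis filter.simps(2) filter_append)
  then show ?thesis by (simp add: edge_at_def nth_append)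
qed

lemma edge_at_lt:
  assumes p: "p < length D" and c: "cuts (D!p)"
  shows "edge_at D p < length (filter cuts D)"
  using edge_at_Suc[OF p] c edge_at_le[of D "Suc p"] by simp

lemma edge_at_surj:
  "r \<le> edge_at D p \<Longrightarrow> \<exists>p'\<le>p. edge_at D p' = r"
proof (induction p arbitrary: r)
  case 0
  then show ?case by (simp add: edge_at_0)
next
  case (Suc p)
  have "edge_at D (Suc p) \<le> edge_at D p + 1"
    by (cases "p < length D") (auto simp: edge_at_Suc, simp add: edge_at_def)
  show ?case
  proof (cases "r \<le> edge_at D p")
    case True
    then show ?thesis using Suc.IH le_SucI by blast
  next
    case False
    then have "r = edge_at D (Suc p)" using Suc.prems \<open>edge_at D (Suc p) \<le> edge_at D p + 1\<close> by linarith
    then show ?thesis by blast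
  qed
qed

lemma is_under_cuts: "is_under c x \<Longrightarrow> cuts x"
  by (cases x) (auto simp: cuts_def)

lemma under_pos_eq:
  assumes wf: "wf_diag D" and q: "q < length D" and u: "D ! q = Under c s'"
  shows "under_pos (filter cuts D) c = edge_at D q"
proof -
  let ?ys = "filter cuts D"
  have cq: "cuts (D!q)" using u by (simp add: cuts_def)
  have e: "?ys ! edge_at D q = Under c s'" using edge_at_nth[OF q cq] u by simp
  have lt: "edge_at D q < length ?ys" using edge_at_lt[OF q cq] .
  have "filter (is_under c) ?ys = filter (is_under c) D"
    by (simp add: filter_filter) (metis is_under_cuts)
  moreover have "length (filter (is_under c) D) \<le> 1" using wf unfolding wf_diag_def by metis
  ultimately have le: "length (filter (is_under c) ?ys) \<le> 1" by simp
  show ?thesis unfolding under_pos_def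
  proof (rule Least_equality)
    show "edge_at D q < length ?ys \<and> is_under c (?ys ! edge_at D q)" using lt e by simp
  next
    fix j assume "j < length ?ys \<and> is_under c (?ys ! j)"
    then have "j = edge_at D q" using filter_le1_unique[OF le] lt e by auto
    then show "edge_at D q \<le> j" by simp
  qed
qed


definition rowc :: "event list \<Rightarrow> nat \<Rightarrow> (nat \<Rightarrow> qT) \<Rightarrow> qT" where
  "rowc ys r x = (case ys!r of Over c s \<Rightarrow> - (Tv powi s) * x (Suc r) + (Tv powi s - 1) * x (Suc (under_pos ys c))
     | Under c s \<Rightarrow> - x (Suc r) | NullV \<Rightarrow> - x (Suc r) | PtA \<Rightarrow> 0 | PtB \<Rightarrow> 0)"

lemma contrib_zero: "k \<noteq> r \<Longrightarrow> contrib ys k r q = 0"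
  by (simp add: contrib_def split: event.split)

lemma under_pos_lt:
  assumes wf: "wf_diag D" and r: "r < length (filter cuts D)" and o: "filter cuts D ! r = Over c s"
  shows "under_pos (filter cuts D) c < length (filter cuts D)"
proof -
  have "Over c s \<in> set D" using r o by (metis nth_mem filter_is_subset subsetD)
  then obtain p where p: "p < length D" "D ! p = Over c s" by (auto simp: in_set_conv_nth)
  obtain q s' where q: "q < length D" "D ! q = Under c s'" using wf_under_exists[OF wf p] by blast
  have "cuts (D!q)" using q by (simp add: cuts_def)
  then show ?thesis using under_pos_eq[OF wf q] edge_at_lt[OF q(1)] by simp
qed

lemma row_formula:
  assumes wf: "wf_diag D" and r: "r < num_edges D"
  shows "(\<Sum>q<num_edges D. Amat D $$ (r,q) * x q) =
         x r + (if r < length (filter cuts D) then rowc (filter cuts D) r x else 0)"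
proof -
  let ?ys = "filter cuts D"
  let ?n = "length ?ys"
  let ?N = "num_edges D"
  have N: "?N = Suc ?n" by (simp add: num_edges_def)
  have A: "Amat D $$ (r,q) = (if r = q then 1 else 0) + (if r < ?n then contrib ?ys r r q else 0)"
    if "q < ?N" for q
  proof -
    have "Amat D $$ (r,q) = (if r = q then 1 else 0) + (\<Sum>k<?n. contrib ?ys k r q)"
      using that r N by (simp add: Amat_def Let_def)
    also have "(\<Sum>k<?n. contrib ?ys k r q) = (\<Sum>k<?n. if k = r then contrib ?ys r r q else 0)"
      by (rule sum.cong) (auto simp: contrib_zero)
    also have "\<dots> = (if r < ?n then contrib ?ys r r q else 0)" by (simp add: sum.delta')
    finally show ?thesis .
  qed
  have R: "(\<Sum>q<?N. contrib ?ys r r q * x q) = rowc ?ys r x" if rn: "r < ?n"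
  proof (cases "?ys ! r")
    case (Over c s)
    have u: "under_pos ?ys c < ?n" using under_pos_lt[OF wf rn Over] .
    have "(\<Sum>q<?N. contrib ?ys r r q * x q) =
          (\<Sum>q<?N. (if q = Suc r then - (Tv powi s) * x q else 0) + (if q = Suc (under_pos ?ys c) then (Tv powi s - 1) * x q else 0))"
      by (rule sum.cong) (auto simp: contrib_def Over algebra_simps)
    also have "\<dots> = - (Tv powi s) * x (Suc r) + (Tv powi s - 1) * x (Suc (under_pos ?ys c))"
    proof -
      have "Suc r < ?N" "Suc (under_pos ?ys c) < ?N" using rn u N by auto
      then show ?thesis by (simp only: sum.distrib sum.delta sum.delta' finite_lessThan lessThan_iff if_True)
    qed
    finally show ?thesis by (simp add: rowc_def Over)
  next
    case (Under c s)
    have "(\<Sum>q<?N. contrib ?ys r r q * x q) = (\<Sum>q<?N. (if q = Suc r then - x q else 0))"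
      by (rule sum.cong) (auto simp: contrib_def Under)
    moreover have "Suc r < ?N" using rn N by auto
    ultimately show ?thesis by (simp add: sum.delta' rowc_def Under)
  next
    case NullV
    have "(\<Sum>q<?N. contrib ?ys r r q * x q) = (\<Sum>q<?N. (if q = Suc r then - x q else 0))"
      by (rule sum.cong) (auto simp: contrib_def NullV)
    moreover have "Suc r < ?N" using rn N by auto
    ultimately show ?thesis by (simp add: sum.delta' rowc_def NullV)
  qed (auto simp: contrib_def rowc_def)
  have "(\<Sum>q<?N. Amat D $$ (r,q) * x q) =
        (\<Sum>q<?N. (if r = q then x q else 0) + (if r < ?n then contrib ?ys r r q * x q else 0))"
    by (rule sum.cong) (auto simp: A distrib_right)
  also have "\<dots> = x r + (if r < ?n then (\<Sum>q<?N. contrib ?ys r r q * x q) else 0)"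
    using r by (simp add: sum.distrib sum.delta)
  finally show ?thesis using R by simp
qed


definition upos :: "event list \<Rightarrow> nat \<Rightarrow> nat" where
  "upos D c = (SOME q. q < length D \<and> (\<exists>s'. D!q = Under c s'))"

lemma upos_props:
  assumes wf: "wf_diag D" and p: "p < length D" and o: "D ! p = Over c s"
  shows "upos D c < length D" "\<exists>s'. D ! upos D c = Under c s'"
    "under_pos (filter cuts D) c = edge_at D (upos D c)"
    "edge_at D (Suc (upos D c)) = Suc (edge_at D (upos D c))"
proof -
  have ex: "\<exists>q. q < length D \<and> (\<exists>s'. D!q = Under c s')" using wf_under_exists[OF wf p o] by blast
  show q: "upos D c < length D" "\<exists>s'. D ! upos D c = Under c s'"
    using someI_ex[OF ex] by (auto simp: upos_def)
  then obtain s' where s': "D ! upos D c = Under c s'" by blast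
  show "under_pos (filter cuts D) c = edge_at D (upos D c)" using under_pos_eq[OF wf q(1) s'] .
  show "edge_at D (Suc (upos D c)) = Suc (edge_at D (upos D c))"
    using edge_at_Suc[OF q(1)] s' by (simp add: cuts_def)
qed

lemma rowc_D:
  assumes wf: "wf_diag D" and p: "p < length D" and c: "cuts (D!p)"
  shows "rowc (filter cuts D) (edge_at D p) x = (case D!p of
       Over c s \<Rightarrow> - (Tv powi s) * x (edge_at D (Suc p)) + (Tv powi s - 1) * x (edge_at D (Suc (upos D c)))
     | _ \<Rightarrow> - x (edge_at D (Suc p)))"
proof -
  have e: "filter cuts D ! edge_at D p = D ! p" using edge_at_nth[OF p c] .
  have s: "edge_at D (Suc p) = Suc (edge_at D p)" using edge_at_Suc[OF p] c by simp
  show ?thesis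
  proof (cases "D!p")
    case (Over c s)
    show ?thesis using upos_props[OF wf p Over] by (simp add: rowc_def e Over s)
  qed (use c in \<open>simp_all add: rowc_def e s cuts_def\<close>)
qed

lemma Amat_carrier: "Amat D \<in> carrier_mat (num_edges D) (num_edges D)"
  by (simp add: Amat_def Let_def num_edges_def)

lemma Amat_mult_vec:
  assumes wf: "wf_diag D" and v: "v \<in> carrier_vec (num_edges D)" and r: "r < num_edges D"
  shows "(Amat D *\<^sub>v v) $ r = v $ r + (if r < length (filter cuts D) then rowc (filter cuts D) r (\<lambda>q. v $ q) else 0)"
proof -
  have "(Amat D *\<^sub>v v) $ r = (\<Sum>q<num_edges D. Amat D $$ (r,q) * v $ q)"
    using r v Amat_carrier[of D]
    by (auto simp: mult_mat_vec_def scalar_prod_def lessThan_atLeast0 intro!: sum.cong)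
  then show ?thesis using row_formula[OF wf r] by simp
qed

lemma Amat_mult_mat:
  assumes wf: "wf_diag D" and B: "B \<in> carrier_mat (num_edges D) (num_edges D)"
    and r: "r < num_edges D" and b: "b < num_edges D"
  shows "(Amat D * B) $$ (r, b) = B $$ (r, b) + (if r < length (filter cuts D) then rowc (filter cuts D) r (\<lambda>q. B $$ (q, b)) else 0)"
proof -
  have "(Amat D * B) $$ (r, b) = (\<Sum>q<num_edges D. Amat D $$ (r,q) * B $$ (q, b))"
    using r b B Amat_carrier[of D]
    by (auto simp: scalar_prod_def lessThan_atLeast0 intro!: sum.cong)
  then show ?thesis using row_formula[OF wf r] by simp
qed

lemma hsys_from_rows:
  assumes wf: "wf_diag D"
    and rows: "\<And>r. r < num_edges D \<Longrightarrow> x r + (if r < length (filter cuts D) then rowc (filter cuts D) r x else 0) = 0"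
  shows "hsys (length D) (\<lambda>p. x (edge_at D p))"
  unfolding hsys_def
proof (intro conjI allI impI)
  have "x (length (filter cuts D)) = 0" using rows[of "length (filter cuts D)"] by (simp add: num_edges_def)
  then show "x (edge_at D (length D)) = 0" by (simp add: edge_at_len)
next
  fix p assume p: "p < length D"
  show "x (edge_at D p) = x (edge_at D (Suc p)) \<or>
     (\<exists>q\<le>length D. \<exists>s::int. (s = 1 \<or> s = -1) \<and>
        x (edge_at D p) = Tv powi s * x (edge_at D (Suc p)) + (1 - Tv powi s) * x (edge_at D q))"
  proof (cases "cuts (D!p)")
    case False
    then show ?thesis using edge_at_Suc[OF p] by simp
  next
    case True
    have lt: "edge_at D p < length (filter cuts D)" using edge_at_lt[OF p True] .
    then have R: "x (edge_at D p) + rowc (filter cuts D) (edge_at D p) x = 0"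
      using rows[of "edge_at D p"] by (simp add: num_edges_def)
    show ?thesis
    proof (cases "D!p")
      case (Over c s)
      have "Over c s \<in> set D" using p Over by (metis nth_mem)
      then have s: "s = 1 \<or> s = -1" using wf unfolding wf_diag_def by blast
      have q: "Suc (upos D c) \<le> length D" using upos_props(1)[OF wf p Over] by simp
      from R have "x (edge_at D p) = Tv powi s * x (edge_at D (Suc p)) + (1 - Tv powi s) * x (edge_at D (Suc (upos D c)))"
        using rowc_D[OF wf p True, of x] Over by (simp add: algebra_simps eq_neg_iff_add_eq_0[symmetric])
      then show ?thesis using s q by blast
    next
      case (Under c s)
      then show ?thesis using R rowc_D[OF wf p True, of x] by (simp add: eq_neg_iff_add_eq_0[symmetric])
    next
      case NullV
      then show ?thesis using R rowc_D[OF wf p True, of x] by (simp add: eq_neg_iff_add_eq_0[symmetric])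
    qed (use True in \<open>auto simp: cuts_def\<close>)
  qed
qed

lemma Amat_inj:
  assumes wf: "wf_diag D" and v: "v \<in> carrier_vec (num_edges D)" and z: "Amat D *\<^sub>v v = 0\<^sub>v (num_edges D)"
  shows "v = 0\<^sub>v (num_edges D)"
proof -
  have rows: "v $ r + (if r < length (filter cuts D) then rowc (filter cuts D) r (\<lambda>q. v $ q) else 0) = 0"
    if "r < num_edges D" for r
    using Amat_mult_vec[OF wf v that] z that by simp
  have h: "hsys (length D) (\<lambda>p. v $ (edge_at D p))" using hsys_from_rows[OF wf rows] by simp
  show ?thesis
  proof (rule eq_vecI)
    fix r assume "r < dim_vec (0\<^sub>v (num_edges D) :: qT vec)"
    then have "r \<le> edge_at D (length D)" by (simp add: num_edges_def edge_at_len)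
    then obtain p where "p \<le> length D" "edge_at D p = r" using edge_at_surj by blast
    then show "v $ r = 0\<^sub>v (num_edges D) $ r" using hsys_zero[OF h, of p] \<open>r < _\<close> by simp
  qed (use v in simp)
qed

lemma Gmat_props:
  assumes wf: "wf_diag D"
  shows "Gmat D \<in> carrier_mat (num_edges D) (num_edges D)" "Amat D * Gmat D = 1\<^sub>m (num_edges D)"
proof -
  let ?N = "num_edges D"
  have "det (Amat D) \<noteq> 0"
    using det_0_iff_vec_prod_zero_field[OF Amat_carrier[of D]] Amat_inj[OF wf] by blast
  then have "Amat D \<in> Units (ring_mat TYPE(qT) ?N ())"
    by (rule det_non_zero_imp_unit[OF Amat_carrier[of D]])
  then have ex: "\<exists>B. B \<in> carrier_mat ?N ?N \<and> Amat D * B = 1\<^sub>m ?N \<and> B * Amat D = 1\<^sub>m ?N"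
    by (auto simp: Units_def ring_mat_def)
  have "Gmat D \<in> carrier_mat ?N ?N \<and> Amat D * Gmat D = 1\<^sub>m ?N \<and> Gmat D * Amat D = 1\<^sub>m ?N"
    unfolding Gmat_def by (rule someI_ex[OF ex])
  then show "Gmat D \<in> carrier_mat ?N ?N" "Amat D * Gmat D = 1\<^sub>m ?N" by auto
qed


lemma pos_of_props:
  assumes "\<exists>p<length D. D ! p = e"
  shows "pos_of D e < length D" "D ! pos_of D e = e"
  using LeastI_ex[of "\<lambda>p. p < length D \<and> D ! p = e"] assms by (auto simp: pos_of_def)

lemma pt_unique:
  assumes "count_list D e = 1" "p < length D" "q < length D" "D ! p = e" "D ! q = e"
  shows "p = q"
  using filter_le1_unique[of "\<lambda>y. y = e" D p q] assms by (simp add: count_list_filter)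

lemma under_unique:
  assumes wf: "wf_diag D" "p < length D" "q < length D" "D ! p = Under c s" "D ! q = Under c s'"
  shows "p = q"
proof -
  have "length (filter (is_under c) D) \<le> 1" using wf unfolding wf_diag_def by metis
  then show ?thesis using filter_le1_unique[of "is_under c" D p q] assms by simp
qed

lemma run_exists:
  assumes wf: "wf_diag D"
  shows "\<exists>U v. run U (gtilde D) D v 0"
proof -
  let ?N = "num_edges D"
  let ?ys = "filter cuts D"
  let ?n = "length ?ys"
  let ?m = "length D"
  define G where "G = Gmat D"
  define pa where "pa = pos_of D PtA"
  define pb where "pb = pos_of D PtB"
  have pa: "pa < ?m" "D ! pa = PtA" using pos_of_props[OF wf_ptA[OF wf]] by (auto simp: pa_def)
  have pb: "pb < ?m" "D ! pb = PtB" using pos_of_props[OF wf_ptB[OF wf]] by (auto simp: pb_def)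
  have cA: "count_list D PtA = 1" and cB: "count_list D PtB = 1" using wf by (auto simp: wf_diag_def)
  define \<beta> where "\<beta> = edge_at D pb"
  have \<beta>N: "\<beta> < ?N" using edge_at_le[of D pb] by (simp add: \<beta>_def num_edges_def)
  have GA: "G \<in> carrier_mat ?N ?N" "Amat D * G = 1\<^sub>m ?N" using Gmat_props[OF wf] by (auto simp: G_def)
  define x where "x = (\<lambda>q. G $$ (q, \<beta>))"
  have rows: "x r + (if r < ?n then rowc ?ys r x else 0) = (if r = \<beta> then 1 else 0)" if "r < ?N" for r
    using Amat_mult_mat[OF wf GA(1) that \<beta>N] GA(2) that \<beta>N by (simp add: x_def)
  define y where "y = (\<lambda>p. x (edge_at D p) - (if edge_at D p = \<beta> \<and> pb < p then 1 else 0))"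
  define U where "U = (\<lambda>c. y (Suc (upos D c)))"
  have I1: "\<not> (edge_at D (Suc p) = \<beta> \<and> pb < Suc p)" if "p < ?m" "cuts (D!p)" for p
  proof
    assume a: "edge_at D (Suc p) = \<beta> \<and> pb < Suc p"
    then have "edge_at D pb \<le> edge_at D p" using edge_at_mono by simp
    then show False using a edge_at_Suc[OF that(1)] that(2) by (simp add: \<beta>_def)
  qed
  have I2: "pb < p" if "p < ?m" "cuts (D!p)" "edge_at D p = \<beta>" for p
  proof (rule ccontr)
    assume "\<not> pb < p"
    moreover have "p \<noteq> pb" using that(2) pb(2) by (auto simp: cuts_def)
    ultimately have "Suc p \<le> pb" by simp
    then have "edge_at D (Suc p) \<le> edge_at D pb" by (rule edge_at_mono)
    then show False using edge_at_Suc[OF that(1)] that by (simp add: \<beta>_def)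
  qed
  have ycut: "y p = x (edge_at D p) - (if edge_at D p = \<beta> then 1 else 0)" "y (Suc p) = x (edge_at D (Suc p))"
    if "p < ?m" "cuts (D!p)" for p
    using I1[OF that] I2[OF that] by (auto simp: y_def)
  have steps: "step U (gtilde D) (D!p) (y p) (y (Suc p))" if p: "p < ?m" for p
  proof (cases "cuts (D!p)")
    case True
    have lt: "edge_at D p < ?n" using edge_at_lt[OF p True] .
    then have R: "x (edge_at D p) + rowc ?ys (edge_at D p) x = (if edge_at D p = \<beta> then 1 else 0)"
      using rows[of "edge_at D p"] by (simp add: num_edges_def)
    have R2: "rowc ?ys (edge_at D p) x = (case D!p of
       Over c s \<Rightarrow> - (Tv powi s) * x (edge_at D (Suc p)) + (Tv powi s - 1) * x (edge_at D (Suc (upos D c)))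
     | _ \<Rightarrow> - x (edge_at D (Suc p)))" using rowc_D[OF wf p True] .
    show ?thesis
    proof (cases "D!p")
      case (Over c s)
      have uq: "upos D c < ?m" "\<exists>s'. D ! upos D c = Under c s'" using upos_props[OF wf p Over] by auto
      have "cuts (D ! upos D c)" using uq(2) by (auto simp: cuts_def)
      then have Uc: "U c = x (edge_at D (Suc (upos D c)))" using ycut(2)[OF uq(1)] by (simp add: U_def)
      show ?thesis using R R2 Over ycut[OF p True] Uc by (simp add: algebra_simps)
    next
      case (Under c s)
      have ex: "\<exists>q. q < ?m \<and> (\<exists>s'. D!q = Under c s')" using p Under by blast
      have "upos D c < ?m" "\<exists>s'. D ! upos D c = Under c s'" using someI_ex[OF ex] by (auto simp: upos_def)
      then have "upos D c = p" using under_unique[OF wf _ p] Under by blast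
      then show ?thesis using R R2 Under ycut[OF p True] by (simp add: U_def algebra_simps)
    next
      case NullV
      then show ?thesis using R R2 ycut[OF p True] by (simp add: algebra_simps)
    qed (use True in \<open>auto simp: cuts_def\<close>)
  next
    case False
    have e: "edge_at D (Suc p) = edge_at D p" using edge_at_Suc[OF p] False by simp
    show ?thesis
    proof (cases "D!p")
      case PtA
      then have "p = pa" using pt_unique[OF cA p pa(1)] pa(2) by simp
      moreover have "pb \<noteq> pa" using pa pb by auto
      ultimately show ?thesis using PtA e
        by (auto simp: y_def gtilde_def Let_def pa_def[symmetric] pb_def[symmetric] \<beta>_def[symmetric] x_def G_def)
    next
      case PtB
      then have "p = pb" using pt_unique[OF cB p pb(1)] pb(2) by simp
      then show ?thesis using PtB e by (auto simp: y_def \<beta>_def)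
    qed (use False in \<open>auto simp: cuts_def\<close>)
  qed
  have "y ?m = 0"
  proof -
    have "x ?n = (if ?n = \<beta> then 1 else 0)" using rows[of ?n] by (simp add: num_edges_def)
    then show ?thesis using pb by (auto simp: y_def edge_at_len)
  qed
  then have "run U (gtilde D) D (y 0) 0" using steps run_seg by blast
  then show ?thesis by blast
qed

lemma run_gtilde:
  assumes wf: "wf_diag D" and r: "run U a D v 0"
  shows "gtilde D = a"
proof -
  obtain U' v' where "run U' (gtilde D) D v' 0" using run_exists[OF wf] by blast
  then show ?thesis using run_unique[OF wf] r by metis
qed


lemma powi_m1: "Tv powi (-1) = inverse Tv" by (simp add: power_int_minus)

lemma r3_core_case:
  assumes e: "e 0 = 1 \<or> e 0 = -1" "e 1 = 1 \<or> e 1 = -1" "e 2 = 1 \<or> e 2 = -1"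
    and hB: "h B < h M" and hM: "h M < h T"
    and BMT: "(B, M, T) \<in> {(0,1,2), (0,2,1), (1,0,2), (1,2,0), (2,0,1), (2,1,0)}"
    and cn: "distinct [cn 0 1, cn 0 2, cn 1 2]"
    and r: "\<And>i. i < 3 \<Longrightarrow> run U a (r3_before e h cn i) (st i) (en i)" and "i < 3"
  shows "run (U(cn (min M T) (max M T) := (if hd (r3_order e M) = B then st M else en M))) a (r3_after e h cn i) (st i) (en i)"
proof -
  have r0: "run U a (r3_before e h cn 0) (st 0) (en 0)" and r1: "run U a (r3_before e h cn 1) (st 1) (en 1)"
    and r2: "run U a (r3_before e h cn 2) (st 2) (en 2)" using r by auto
  have i: "i = 0 \<or> i = 1 \<or> i = 2" using \<open>i < 3\<close> by auto
  have Tn: "Tv \<noteq> 0" by (rule Tv_nz)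
  obtain c01 c02 c12 where cs: "cn 0 1 = c01" "cn 0 2 = c02" "cn 1 2 = c12" by blast
  have cs2: "cn 0 (Suc 0) = c01" "cn (Suc 0) 2 = c12" "cn (Suc 0) (Suc (Suc 0)) = c12" "cn 0 (Suc (Suc 0)) = c02"
    using cs by (simp_all add: numeral_2_eq_2)
  have dc: "c01 \<noteq> c02" "c01 \<noteq> c12" "c02 \<noteq> c12" "c02 \<noteq> c01" "c12 \<noteq> c01" "c12 \<noteq> c02" using cn cs by auto
  from BMT e i r0 r1 r2 hB hM Tn show ?thesis
    apply (simp only: insert_iff empty_iff prod.inject)
    apply (elim disjE conjE)
    apply (simp_all add: r3_after_def r3_before_def r3_order_def r3_event_def kap_def kap0_def powi_m1 cs cs2 dc)
    apply (auto simp: field_simps)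
    done
qed


definition labs :: "event list \<Rightarrow> nat set" where
  "labs xs = {c. \<exists>s. Over c s \<in> set xs \<or> Under c s \<in> set xs}"

lemma run_cong:
  assumes "\<And>c. c \<in> labs xs \<Longrightarrow> U c = U' c"
  shows "run U a xs v w = run U' a xs v w"
  using assms
proof (induction xs arbitrary: v)
  case Nil
  then show ?case by simp
next
  case (Cons e xs)
  have ih: "run U a xs v' w = run U' a xs v' w" for v'
    using Cons.prems by (intro Cons.IH) (auto simp: labs_def)
  have lab: "U c = U' c" if "e = Over c s \<or> e = Under c s" for c s
    using that by (intro Cons.prems) (auto simp: labs_def)
  have "step U a e v v' = step U' a e v v'" for v'
    by (cases e) (simp_all add: lab)
  then show ?case using ih by simp
qed

lemma filter_mset_len:
  assumes "mset X = mset A + mset B"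
  shows "length (filter P X) = length (filter P A) + length (filter P B)"
proof -
  have "length (filter P X) = size (filter_mset P (mset X))" by (metis mset_filter size_mset)
  also have "\<dots> = size (filter_mset P (mset A)) + size (filter_mset P (mset B))" using assms by simp
  also have "\<dots> = length (filter P A) + length (filter P B)" by (metis mset_filter size_mset)
  finally show ?thesis .
qed

lemma fresh_lab:
  assumes wf: "wf_diag X" and ms: "mset X = mset A + mset B"
    and o: "Over c s1 \<in> set B" and u: "Under c s2 \<in> set B"
  shows "c \<notin> labs A"
proof
  assume "c \<in> labs A"
  then obtain s where "Over c s \<in> set A \<or> Under c s \<in> set A" by (auto simp: labs_def)
  then show False
  proof
    assume a: "Over c s \<in> set A"
    have "filter (is_over c) A \<noteq> []" "filter (is_over c) B \<noteq> []"
      using a o by (metis filter_empty_conv is_over.simps(1))+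
    then have "2 \<le> length (filter (is_over c) X)" using filter_mset_len[OF ms]
      by (metis One_nat_def Suc_leI add_mono length_greater_0_conv one_add_one)
    then show False using wf unfolding wf_diag_def by (metis numeral_le_one_iff semiring_norm(69) order_trans)
  next
    assume a: "Under c s \<in> set A"
    have "filter (is_under c) A \<noteq> []" "filter (is_under c) B \<noteq> []"
      using a u by (metis filter_empty_conv is_under.simps(1))+
    then have "2 \<le> length (filter (is_under c) X)" using filter_mset_len[OF ms]
      by (metis One_nat_def Suc_leI add_mono length_greater_0_conv one_add_one)
    then show False using wf unfolding wf_diag_def by (metis numeral_le_one_iff semiring_norm(69) order_trans)
  qed
qed

lemma run_cong_upd:
  assumes "c \<notin> labs xs" shows "run (U(c := z)) a xs v w = run U a xs v w"
  using assms by (intro run_cong) auto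

lemma move_from_runs:
  assumes wfD: "wf_diag D" and wfD': "wf_diag D'"
    and cons: "\<And>U a v. run U a D v 0 \<Longrightarrow> \<exists>U' v'. run U' a D' v' 0"
  shows "gtilde D' = gtilde D"
proof -
  obtain U v where "run U (gtilde D) D v 0" using run_exists[OF wfD] by blast
  then obtain U' v' where "run U' (gtilde D) D' v' 0" using cons by blast
  then show ?thesis by (rule run_gtilde[OF wfD'])
qed

lemma R1_ok:
  assumes R: "R1_step D D'" and wfD: "wf_diag D" and wfD': "wf_diag D'"
  shows "gtilde D' = gtilde D"
proof (rule move_from_runs[OF wfD wfD'])
  fix U a v assume r: "run U a D v 0"
  obtain p0 p1 c s seg where s: "s = 1 \<or> s = -1" and seg: "seg = [Over c s, Under c s] \<or> seg = [Under c s, Over c s]"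
    and D: "D = p0 @ p1" and D': "D' = p0 @ seg @ p1"
    using R unfolding R1_step_def by blast
  have os: "Over c s \<in> set seg" "Under c s \<in> set seg" using seg by auto
  have f0: "c \<notin> labs p0" by (rule fresh_lab[where A=p0 and B="seg @ p1", OF wfD']) (use os in \<open>auto simp: D'\<close>)
  have f1: "c \<notin> labs p1" by (rule fresh_lab[where A=p1 and B="p0 @ seg", OF wfD']) (use os in \<open>auto simp: D'\<close>)
  from r obtain m where m: "run U a p0 v m" "run U a p1 m 0" using D by (auto simp: run_append)
  have "run (U(c := m)) a seg m m" using seg Tv_nz by (auto simp: algebra_simps)
  then have "run (U(c := m)) a D' v 0"
    using m run_cong_upd[OF f0] run_cong_upd[OF f1] by (auto simp: D' run_append)
  then show "\<exists>U' v'. run U' a D' v' 0" by blast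
qed

lemma ov_ok:
  assumes s: "s = 1 \<or> s = -1" and u: "U c1 = u" "U c2 = u"
  shows "run U a [Over c1 s, Over c2 (- s)] w w"
proof -
  have T: "Tv \<noteq> 0" by (rule Tv_nz)
  define v' where "v' = Tv powi (- s) * w + (1 - Tv powi (- s)) * u"
  have "w = Tv powi s * v' + (1 - Tv powi s) * u"
    using s T by (auto simp: v'_def powi_m1 field_simps)
  then show ?thesis using u by (auto simp: v'_def)
qed

lemma un_ok:
  assumes u: "U c1 = w" "U c2 = w"
  shows "run U a (if par then [Under c1 s, Under c2 (- s)] else [Under c2 (- s), Under c1 s]) w w"
  using u by auto

lemma R2_ok:
  assumes R: "R2_step D D'" and wfD: "wf_diag D" and wfD': "wf_diag D'"
  shows "gtilde D' = gtilde D"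
proof (rule move_from_runs[OF wfD wfD'])
  fix U a v assume r: "run U a D v 0"
  obtain p0 p1 p2 c1 c2 s par ofirst ov un where c12: "c1 \<noteq> c2" and s: "s = 1 \<or> s = -1"
    and ov: "ov = [Over c1 s, Over c2 (- s)]"
    and un: "un = (if par then [Under c1 s, Under c2 (- s)] else [Under c2 (- s), Under c1 s])"
    and D: "D = p0 @ p1 @ p2"
    and D': "D' = p0 @ (if ofirst then ov else un) @ p1 @ (if ofirst then un else ov) @ p2"
    using R unfolding R2_step_def by blast
  let ?B = "ov @ un"
  have ms: "mset D' = mset p0 + mset (ov @ un @ p1 @ p2)" "mset D' = mset p1 + mset (p0 @ ov @ un @ p2)"
     "mset D' = mset p2 + mset (p0 @ ov @ un @ p1)"
    by (auto simp: D')
  have o1: "Over c1 s \<in> set (ov @ un @ p1 @ p2)" "Under c1 s \<in> set (ov @ un @ p1 @ p2)"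
    "Over c1 s \<in> set (p0 @ ov @ un @ p2)" "Under c1 s \<in> set (p0 @ ov @ un @ p2)"
    "Over c1 s \<in> set (p0 @ ov @ un @ p1)" "Under c1 s \<in> set (p0 @ ov @ un @ p1)"
    using ov un by auto
  have o2: "Over c2 (-s) \<in> set (ov @ un @ p1 @ p2)" "Under c2 (-s) \<in> set (ov @ un @ p1 @ p2)"
    "Over c2 (-s) \<in> set (p0 @ ov @ un @ p2)" "Under c2 (-s) \<in> set (p0 @ ov @ un @ p2)"
    "Over c2 (-s) \<in> set (p0 @ ov @ un @ p1)" "Under c2 (-s) \<in> set (p0 @ ov @ un @ p1)"
    using ov un by auto
  have f1: "c1 \<notin> labs p0" "c1 \<notin> labs p1" "c1 \<notin> labs p2"
    using fresh_lab[OF wfD' ms(1) o1(1,2)] fresh_lab[OF wfD' ms(2) o1(3,4)] fresh_lab[OF wfD' ms(3) o1(5,6)] by auto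
  have f2: "c2 \<notin> labs p0" "c2 \<notin> labs p1" "c2 \<notin> labs p2"
    using fresh_lab[OF wfD' ms(1) o2(1,2)] fresh_lab[OF wfD' ms(2) o2(3,4)] fresh_lab[OF wfD' ms(3) o2(5,6)] by auto
  from r obtain m1 m2 where m: "run U a p0 v m1" "run U a p1 m1 m2" "run U a p2 m2 0"
    using D by (auto simp: run_append)
  define u where "u = (if ofirst then m2 else m1)"
  define U' where "U' = U(c1 := u, c2 := u)"
  have U'u: "U' c1 = u" "U' c2 = u" using c12 by (auto simp: U'_def)
  have rp: "run U' a p0 v m1" "run U' a p1 m1 m2" "run U' a p2 m2 0"
    using m f1 f2 by (simp_all add: U'_def run_cong_upd)
  have "run U' a ov w w" for w using ov_ok[OF s U'u] ov by simp
  moreover have "run U' a un u u" using un_ok[OF U'u] un by simp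
  ultimately have "run U' a D' v 0"
  proof (cases ofirst)
    case True
    then have "u = m2" by (simp add: u_def)
    then show ?thesis using rp \<open>run U' a un u u\<close> \<open>\<And>w. run U' a ov w w\<close> True
      unfolding D' run_append by auto
  next
    case False
    then have "u = m1" by (simp add: u_def)
    then show ?thesis using rp \<open>run U' a un u u\<close> \<open>\<And>w. run U' a ov w w\<close>
      unfolding D' run_append if_not_P[OF False] by blast
  qed
  then show "\<exists>U' v'. run U' a D' v' 0" by blast
qed


lemma perm3:
  fixes f :: "nat \<Rightarrow> nat"
  assumes im: "f ` {0,1,2} = {0,1,2}"
  shows "f 0 \<noteq> f 1" "f 0 \<noteq> f 2" "f 1 \<noteq> f 2" "f 0 < 3" "f 1 < 3" "f 2 < 3"
proof -
  have r: "f 0 \<in> {0,1,2}" "f 1 \<in> {0,1,2}" "f 2 \<in> {0,1,2}" using im by blast+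
  show "f 0 < 3" "f 1 < 3" "f 2 < 3" using r by auto
  have c3: "card {f 0, f 1, f 2} = 3" using im by simp
  have le2: "card {x, y :: nat} \<le> 2" for x y by (simp add: card_insert_if)
  show "f 0 \<noteq> f 1"
  proof
    assume "f 0 = f 1" then have "{f 0, f 1, f 2} = {f 0, f 2}" by auto
    then show False using c3 le2[of "f 0" "f 2"] by simp
  qed
  show "f 0 \<noteq> f 2"
  proof
    assume "f 0 = f 2" then have "{f 0, f 1, f 2} = {f 0, f 1}" by auto
    then show False using c3 le2[of "f 0" "f 1"] by simp
  qed
  show "f 1 \<noteq> f 2"
  proof
    assume "f 1 = f 2" then have "{f 0, f 1, f 2} = {f 0, f 1}" by auto
    then show False using c3 le2[of "f 0" "f 1"] by simp
  qed
qed

lemma perm3_cover: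
  fixes f :: "nat \<Rightarrow> nat"
  assumes "f ` {0,1,2} = {0,1,2}" "i < 3"
  shows "i = f 0 \<or> i = f 1 \<or> i = f 2"
proof -
  have "i \<in> {0,1,2}" using assms(2) by auto
  then have "i \<in> f ` {0,1,2}" using assms(1) by simp
  then show ?thesis by auto
qed

lemma h_order:
  fixes h :: "nat \<Rightarrow> nat"
  assumes "h ` {0,1,2} = {0,1,2}"
  shows "\<exists>B M T. h B < h M \<and> h M < h T \<and>
     (B, M, T) \<in> {(0,1,2), (0,2,1), (1,0,2), (1,2,0), (2,0,1), (2,1,0)}"
proof -
  have d: "h 0 \<noteq> h 1" "h 0 \<noteq> h 2" "h 1 \<noteq> h 2" using perm3[OF assms] by auto
  consider "h 0 < h 1" "h 1 < h 2" | "h 0 < h 2" "h 2 < h 1" | "h 1 < h 0" "h 0 < h 2"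
    | "h 1 < h 2" "h 2 < h 0" | "h 2 < h 0" "h 0 < h 1" | "h 2 < h 1" "h 1 < h 0"
    using d by linarith
  then show ?thesis
  proof cases
    case 1 then show ?thesis by (intro exI[of _ 0] exI[of _ 1] exI[of _ 2]) auto
  next
    case 2 then show ?thesis by (intro exI[of _ 0] exI[of _ 2] exI[of _ 1]) auto
  next
    case 3 then show ?thesis by (intro exI[of _ 1] exI[of _ 0] exI[of _ 2]) auto
  next
    case 4 then show ?thesis by (intro exI[of _ 1] exI[of _ 2] exI[of _ 0]) auto
  next
    case 5 then show ?thesis by (intro exI[of _ 2] exI[of _ 0] exI[of _ 1]) auto
  next
    case 6 then show ?thesis by (intro exI[of _ 2] exI[of _ 1] exI[of _ 0]) auto
  qed
qed

lemma r3_core: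
  assumes e: "\<forall>i<3. e i = 1 \<or> e i = -1"
    and h: "h ` {0,1,2} = {0,1,2}"
    and cn: "distinct [cn 0 1, cn 0 2, cn 1 2]"
    and r: "\<And>i. i < 3 \<Longrightarrow> run U a (r3_before e h cn i) (st i) (en i)"
  shows "\<exists>U'. (\<forall>c. c \<noteq> cn 0 1 \<longrightarrow> c \<noteq> cn 0 2 \<longrightarrow> c \<noteq> cn 1 2 \<longrightarrow> U' c = U c) \<and>
              (\<forall>i<3. run U' a (r3_after e h cn i) (st i) (en i))"
proof -
  obtain B M T where o: "h B < h M" "h M < h T"
    and BMT: "(B, M, T) \<in> {(0,1,2), (0,2,1), (1,0,2), (1,2,0), (2,0,1), (2,1,0)}"
    using h_order[OF h] by blast
  have e3: "e 0 = 1 \<or> e 0 = -1" "e 1 = 1 \<or> e 1 = -1" "e 2 = 1 \<or> e 2 = -1" using e by auto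
  define U' where "U' = U(cn (min M T) (max M T) := (if hd (r3_order e M) = B then st M else en M))"
  have "cn (min M T) (max M T) = cn 0 1 \<or> cn (min M T) (max M T) = cn 0 2 \<or> cn (min M T) (max M T) = cn 1 2"
    using BMT by (simp only: insert_iff empty_iff prod.inject) (elim disjE conjE; simp add: numeral_2_eq_2)
  then have ag: "\<forall>c. c \<noteq> cn 0 1 \<longrightarrow> c \<noteq> cn 0 2 \<longrightarrow> c \<noteq> cn 1 2 \<longrightarrow> U' c = U c"
    by (auto simp: U'_def)
  have "\<forall>i<3. run U' a (r3_after e h cn i) (st i) (en i)"
    using r3_core_case[OF e3 o BMT cn r] by (simp add: U'_def)
  with ag show ?thesis by blast
qed

lemma mem_before:
  assumes "j \<noteq> i" "i < 3" "j < 3"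
  shows "r3_event e h cn i j \<in> set (r3_before e h cn i)"
proof -
  have "j \<in> set (r3_order e i)" using assms by (auto simp: r3_order_def)
  then show ?thesis by (simp add: r3_before_def)
qed

lemma r3_pair:
  assumes ij: "i < j" "j < 3" and hd: "h i \<noteq> h j"
  shows "\<exists>s1 s2. Over (cn i j) s1 \<in> set (r3_before e h cn 0 @ r3_before e h cn 1 @ r3_before e h cn 2) \<and>
                 Under (cn i j) s2 \<in> set (r3_before e h cn 0 @ r3_before e h cn 1 @ r3_before e h cn 2)"
proof -
  have sub: "set (r3_before e h cn k) \<subseteq> set (r3_before e h cn 0 @ r3_before e h cn 1 @ r3_before e h cn 2)"
    if "k < 3" for k
  proof -
    have "k = 0 \<or> k = 1 \<or> k = 2" using that by auto
    then show ?thesis by (elim disjE) auto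
  qed
  have m1: "r3_event e h cn i j \<in> set (r3_before e h cn i)" using mem_before[of j i] ij by simp
  have m2: "r3_event e h cn j i \<in> set (r3_before e h cn j)" using mem_before[of i j] ij by simp
  have mm: "min i j = i" "max i j = j" "min j i = i" "max j i = j" using ij by auto
  show ?thesis
  proof (cases "h j < h i")
    case True
    then have "\<not> h i < h j" by simp
    then have "Over (cn i j) (kap e i j) \<in> set (r3_before e h cn i)" "Under (cn i j) (kap e i j) \<in> set (r3_before e h cn j)"
      using m1 m2 True by (simp_all add: r3_event_def mm)
    then show ?thesis using sub[of i] sub[of j] ij by auto
  next
    case False
    then have "h i < h j" using hd by simp
    then have "Under (cn i j) (kap e j i) \<in> set (r3_before e h cn i)" "Over (cn i j) (kap e j i) \<in> set (r3_before e h cn j)"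
      using m1 m2 False by (simp_all add: r3_event_def mm)
    then show ?thesis using sub[of i] sub[of j] ij by auto
  qed
qed


lemma R3_ok:
  assumes R: "R3_step D D'" and wfD: "wf_diag D" and wfD': "wf_diag D'"
  shows "gtilde D' = gtilde D"
proof (rule move_from_runs[OF wfD wfD'])
  fix U a v assume r: "run U a D v 0"
  obtain p0 p1 p2 p3 e h cn and \<sigma> :: "nat \<Rightarrow> nat" where H: "(\<forall>i<3. e i = 1 \<or> e i = -1) \<and>
      h ` {0, 1, 2} = {0, 1, 2} \<and> \<sigma> ` {0, 1, 2} = {0, 1, 2} \<and>
      distinct [cn 0 1, cn 0 2, cn 1 2] \<and>
      D = p0 @ r3_before e h cn (\<sigma> 0) @ p1 @ r3_before e h cn (\<sigma> 1) @ p2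
             @ r3_before e h cn (\<sigma> 2) @ p3 \<and>
      D' = p0 @ r3_after e h cn (\<sigma> 0) @ p1 @ r3_after e h cn (\<sigma> 1) @ p2
             @ r3_after e h cn (\<sigma> 2) @ p3"
    using R unfolding R3_step_def by (elim exE) (rule that, assumption)
  have e: "\<forall>i<3. e i = 1 \<or> e i = -1" using H by - (elim conjE, assumption)
  have h: "h ` {0, 1, 2} = {0, 1, 2}" using H by - (elim conjE, assumption)
  have \<sigma>: "\<sigma> ` {0, 1, 2} = {0, 1, 2}" using H by - (elim conjE, assumption)
  have cn: "distinct [cn 0 1, cn 0 2, cn 1 2]" using H by - (elim conjE, assumption)
  have D: "D = p0 @ r3_before e h cn (\<sigma> 0) @ p1 @ r3_before e h cn (\<sigma> 1) @ p2
             @ r3_before e h cn (\<sigma> 2) @ p3" using H by - (elim conjE, assumption)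
  have D': "D' = p0 @ r3_after e h cn (\<sigma> 0) @ p1 @ r3_after e h cn (\<sigma> 1) @ p2
             @ r3_after e h cn (\<sigma> 2) @ p3" using H by - (elim conjE, assumption)
  define B0 where "B0 = r3_before e h cn (\<sigma> 0)"
  define B1 where "B1 = r3_before e h cn (\<sigma> 1)"
  define B2 where "B2 = r3_before e h cn (\<sigma> 2)"
  have sd: "\<sigma> 0 \<noteq> \<sigma> 1" "\<sigma> 0 \<noteq> \<sigma> 2" "\<sigma> 1 \<noteq> \<sigma> 2" using perm3[OF \<sigma>] by auto
  from r obtain m0 n0 m1 n1 m2 n2 where
    rr: "run U a p0 v m0" "run U a B0 m0 n0" "run U a p1 n0 m1" "run U a B1 m1 n1"
        "run U a p2 n1 m2" "run U a B2 m2 n2" "run U a p3 n2 0"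
    using r unfolding D run_append B0_def[symmetric] B1_def[symmetric] B2_def[symmetric]
    by (elim exE conjE) (rule that, assumption+)
  define st where "st = (\<lambda>i. if i = \<sigma> 0 then m0 else if i = \<sigma> 1 then m1 else m2)"
  define en where "en = (\<lambda>i. if i = \<sigma> 0 then n0 else if i = \<sigma> 1 then n1 else n2)"
  have rb: "run U a (r3_before e h cn i) (st i) (en i)" if "i < 3" for i
  proof -
    have "i = \<sigma> 0 \<or> i = \<sigma> 1 \<or> i = \<sigma> 2" using perm3_cover[OF \<sigma> that] .
    then show ?thesis using rr sd by (auto simp: st_def en_def B0_def B1_def B2_def)
  qed
  obtain U' where ag: "\<forall>c. c \<noteq> cn 0 1 \<longrightarrow> c \<noteq> cn 0 2 \<longrightarrow> c \<noteq> cn 1 2 \<longrightarrow> U' c = U c"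
    and ra: "\<forall>i<3. run U' a (r3_after e h cn i) (st i) (en i)"
    using r3_core[OF e h cn rb] by blast
  have s3: "\<sigma> 0 < 3" "\<sigma> 1 < 3" "\<sigma> 2 < 3" using perm3[OF \<sigma>] by auto
  have ra': "run U' a (r3_after e h cn (\<sigma> 0)) m0 n0" "run U' a (r3_after e h cn (\<sigma> 1)) m1 n1"
    "run U' a (r3_after e h cn (\<sigma> 2)) m2 n2"
    using ra[rule_format, OF s3(1)] ra[rule_format, OF s3(2)] ra[rule_format, OF s3(3)] sd
    by (simp_all add: st_def en_def)
  define AB where "AB = r3_before e h cn 0 @ r3_before e h cn 1 @ r3_before e h cn 2"
  have hd3: "h 0 \<noteq> h 1" "h 0 \<noteq> h 2" "h 1 \<noteq> h 2" using perm3[OF h] by auto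
  have lab: "\<exists>s1 s2. Over c s1 \<in> set AB \<and> Under c s2 \<in> set AB"
    if "c = cn 0 1 \<or> c = cn 0 2 \<or> c = cn 1 2" for c
  proof -
    have l1: "\<exists>s1 s2. Over (cn 0 1) s1 \<in> set AB \<and> Under (cn 0 1) s2 \<in> set AB"
      unfolding AB_def by (rule r3_pair[where i=0 and j=1 and h=h and e=e and cn=cn, OF _ _ hd3(1)]; simp)
    have l2: "\<exists>s1 s2. Over (cn 0 2) s1 \<in> set AB \<and> Under (cn 0 2) s2 \<in> set AB"
      unfolding AB_def by (rule r3_pair[where i=0 and j=2 and h=h and e=e and cn=cn, OF _ _ hd3(2)]; simp)
    have l3: "\<exists>s1 s2. Over (cn 1 2) s1 \<in> set AB \<and> Under (cn 1 2) s2 \<in> set AB"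
      unfolding AB_def by (rule r3_pair[where i=1 and j=2 and h=h and e=e and cn=cn, OF _ _ hd3(3)]; simp)
    note l = l1 l2 l3
    from that show ?thesis using l by (elim disjE) simp_all
  qed
  have ABsub: "set AB \<subseteq> set B0 \<union> set B1 \<union> set B2"
  proof -
    have "set (r3_before e h cn k) \<subseteq> set B0 \<union> set B1 \<union> set B2" if "k < 3" for k
      using perm3_cover[OF \<sigma> that] by (auto simp: B0_def B1_def B2_def)
    then show ?thesis unfolding AB_def by auto
  qed
  have fresh: "c \<notin> labs P"
    if P: "P = p0 \<or> P = p1 \<or> P = p2 \<or> P = p3" and c: "c = cn 0 1 \<or> c = cn 0 2 \<or> c = cn 1 2" for P c
  proof -
    obtain s1 s2 where os: "Over c s1 \<in> set AB" "Under c s2 \<in> set AB" using lab[OF c] by blast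
    have D2: "D = p0 @ B0 @ p1 @ B1 @ p2 @ B2 @ p3" by (simp add: D B0_def B1_def B2_def)
    have osB: "Over c s1 \<in> set B0 \<union> set B1 \<union> set B2" "Under c s2 \<in> set B0 \<union> set B1 \<union> set B2"
      using os ABsub by blast+
    have gen: "c \<notin> labs Q" if "mset D = mset Q + mset L" "set B0 \<union> set B1 \<union> set B2 \<subseteq> set L" for Q L
    proof -
      have "Over c s1 \<in> set L" "Under c s2 \<in> set L" using osB that(2) by blast+
      then show ?thesis by (rule fresh_lab[OF wfD that(1)])
    qed
    from P show ?thesis
    proof (elim disjE)
      assume P: "P = p0"
      show ?thesis
        by (rule gen[where L="B0 @ p1 @ B1 @ p2 @ B2 @ p3"]) (auto simp: D2 P ac_simps)
    next
      assume P: "P = p1"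
      show ?thesis
        by (rule gen[where L="p0 @ B0 @ B1 @ p2 @ B2 @ p3"]) (auto simp: D2 P ac_simps)
    next
      assume P: "P = p2"
      show ?thesis
        by (rule gen[where L="p0 @ B0 @ p1 @ B1 @ B2 @ p3"]) (auto simp: D2 P ac_simps)
    next
      assume P: "P = p3"
      show ?thesis
        by (rule gen[where L="p0 @ B0 @ p1 @ B1 @ p2 @ B2"]) (auto simp: D2 P ac_simps)
    qed
  qed
  have rc: "run U' a P x y = run U a P x y" if "P = p0 \<or> P = p1 \<or> P = p2 \<or> P = p3" for P x y
  proof (rule run_cong)
    fix c assume "c \<in> labs P"
    then have "\<not> (c = cn 0 1 \<or> c = cn 0 2 \<or> c = cn 1 2)" using fresh[OF that] by blast
    then show "U' c = U c" using ag by blast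
  qed
  have "run U' a p0 v m0" "run U' a p1 n0 m1" "run U' a p2 n1 m2" "run U' a p3 n2 0"
    using rr rc[of p0] rc[of p1] rc[of p2] rc[of p3] by simp_all
  then have "run U' a D' v 0" using ra' unfolding D' run_append by blast
  then show "\<exists>U' v'. run U' a D' v' 0" by blast
qed

theorem mainTheorem3:
  shows "(\<forall>D D'. reid_move D D' \<longrightarrow> gtilde D' = gtilde D) \<and>
         (\<forall>D D'. reid_move\<^sup>*\<^sup>* D D' \<longrightarrow> gtilde D' = gtilde D)"
proof -
  have one: "gtilde D' = gtilde D" if "reid_move D D'" for D D'
  proof -
    have wf: "wf_diag D" "wf_diag D'" using that by (auto simp: reid_move_def)
    from that have "R1_step D D' \<or> R1_step D' D \<or> R2_step D D' \<or> R2_step D' D \<or>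
      R3_step D D' \<or> R3_step D' D" unfolding reid_move_def by blast
    then show ?thesis
    proof (elim disjE)
      assume "R1_step D D'" then show ?thesis using R1_ok wf by blast
    next
      assume "R1_step D' D" then show ?thesis using R1_ok wf by metis
    next
      assume "R2_step D D'" then show ?thesis using R2_ok wf by blast
    next
      assume "R2_step D' D" then show ?thesis using R2_ok wf by metis
    next
      assume "R3_step D D'" then show ?thesis using R3_ok wf by blast
    next
      assume "R3_step D' D" then show ?thesis using R3_ok wf by metis
    qed
  qed
  have "gtilde D' = gtilde D" if "reid_move\<^sup>*\<^sup>* D D'" for D D'
    using that by (induction rule: rtranclp_induct) (auto dest: one)
  with one show ?thesis by blast
qed

end
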